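(* Let $p>2$ be an odd prime and $q=p^\ell$ with $\ell\geq 1$. Let $\widetilde{\mathbb{F}}$ be a field of characteristic $p$ and $f:\mathbb{F}_q\to\widetilde{\mathbb{F}}$ an SD-map. Then $f(\mathbb{F}_q)$ is the unique subfield of $\widetilde{\mathbb{F}}$ of order $q$ (in particular, such a subfield exists).
   Context: $\mathbb{F}_q$ is the finite field with $q$ elements. A map $f:\mathbb{F}\to\widetilde{\mathbb{F}}$ between fields is called an SD-map if for all $x\neq y$ in $\mathbb{F}$ one has $f(x)\neq f(y)$ and \[ f\left(\frac{x+y}{x-y}\right)=\frac{f(x)+f(y)}{f(x)-f(y)}. \] *)

theory Defs
  imports "HOL-Computational_Algebra.Primes"
begin

definition sd_map :: "('a::field \<Rightarrow> 'b::field) \<Rightarrow> bool" where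
  "sd_map f \<longleftrightarrow> (\<forall>x y. x \<noteq> y \<longrightarrow>
      f x \<noteq> f y \<and> f ((x + y) / (x - y)) = (f x + f y) / (f x - f y))"

definition is_subfield :: "'b::field set \<Rightarrow> bool" where
  "is_subfield S \<longleftrightarrow> 0 \<in> S \<and> 1 \<in> S \<and>
     (\<forall>x\<in>S. \<forall>y\<in>S. x + y \<in> S \<and> x * y \<in> S) \<and>
     (\<forall>x\<in>S. - x \<in> S) \<and> (\<forall>x\<in>S. x \<noteq> 0 \<longrightarrow> inverse x \<in> S)"

end

theory Submission
  imports Defs "HOL-Computational_Algebra.Polynomial"
begin

lemma grp_pow:
  fixes A :: "'b::field set"
  assumes fin: "finite A" and z: "0 \<in> A" and cl: "\<forall>x\<in>A. \<forall>y\<in>A. x * y \<in> A"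
    and cA: "card A = q" and s: "s \<in> A"
  shows "s ^ q = s"
proof (cases "s = 0")
  case True
  have "q \<ge> 1" using cA fin z by (cases "q = 0") auto
  then show ?thesis using True by (simp add: power_0_left)
next
  case False
  define B where "B = A - {0}"
  have finB: "finite B" using fin B_def by simp
  have cB: "card B = q - 1" using cA z fin B_def by (simp add: card_Diff_singleton)
  have inj: "inj_on (\<lambda>x. s * x) B" using False by (auto simp: inj_on_def)
  have sub: "(\<lambda>x. s * x) ` B \<subseteq> B" using cl s False B_def by auto
  have img: "(\<lambda>x. s * x) ` B = B"
    using card_image[OF inj] sub finB card_subset_eq by blast
  have "prod id B = prod id ((\<lambda>x. s * x) ` B)" using img by simp
  also have "\<dots> = prod (\<lambda>x. s * x) B" using prod.reindex[OF inj] by simp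
  also have "\<dots> = s ^ card B * prod id B" by (simp add: prod.distrib)
  finally have eq: "prod id B = s ^ card B * prod id B" .
  have "prod id B \<noteq> 0" using finB B_def by (simp add: prod_zero_iff)
  then have s1: "s ^ card B = 1" using eq by simp
  have "q \<ge> 1" using cA fin s by (cases "q = 0") auto
  then have "q = Suc (card B)" using cB by simp
  then show ?thesis using s1 by simp
qed

lemma roots_bound:
  assumes "q \<ge> 2"
  shows "finite {x::'b::field. x ^ q = x} \<and> card {x::'b::field. x ^ q = x} \<le> q"
proof -
  define P :: "'b poly" where "P = monom 1 q + [:0, -1:]"
  have ev: "poly P x = x ^ q - x" for x by (simp add: P_def poly_monom)
  have dP: "degree P = q" using assms unfolding P_def
    by (subst degree_add_eq_left) (auto simp: degree_monom_eq)
  have P0: "P \<noteq> 0" using dP assms by auto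
  have eqs: "{x::'b. x ^ q = x} = {x. poly P x = 0}" by (auto simp: ev)
  show ?thesis unfolding eqs using poly_roots_finite[OF P0] card_poly_roots_bound[OF P0] dP by simp
qed

lemma mob_inj:
  fixes u v :: "'b::field"
  assumes "u \<noteq> 1" "v \<noteq> 1" "(2::'b) \<noteq> 0" "(u + 1) / (u - 1) = (v + 1) / (v - 1)"
  shows "u = v"
proof -
  have "(u + 1) * (v - 1) = (v + 1) * (u - 1)" using assms by (simp add: field_simps)
  then have "2 * u = 2 * v" by (simp add: algebra_simps) (metis add.commute)
  then show ?thesis using assms(3) by (metis mult_cancel_left)
qed

theorem lemma3p1:
  fixes f :: "'a::{field,finite} \<Rightarrow> 'b::field"
    and p l q :: nat
  assumes "prime p" and "p > 2" and "l \<ge> 1" and "q = p ^ l"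
    and "card (UNIV :: 'a set) = q"
    and "CHAR('b) = p"
    and "sd_map f"
  shows "is_subfield (range f) \<and> card (range f) = q \<and>
         (\<forall>S. is_subfield S \<and> finite S \<and> card S = q \<longrightarrow> S = range f)"
proof -
  note pr = assms(1) and p2 = assms(2) and l1 = assms(3) and qd = assms(4) and cU = assms(5)
    and ch = assms(6)
  have sd: "f x \<noteq> f y \<and> f ((x + y) / (x - y)) = (f x + f y) / (f x - f y)" if "x \<noteq> y" for x y
    using assms(7) that unfolding sd_map_def by blast
  have two: "(2::'b) \<noteq> 0"
  proof
    assume "(2::'b) = 0"
    then have "of_nat 2 = (0::'b)" by simp
    then have "p dvd 2" using of_nat_eq_0_iff_char_dvd ch by metis
    then show False using p2 by (metis dvd_imp_le not_le zero_less_numeral)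
  qed
  have q3: "q \<ge> 3"
  proof -
    have "p ^ 1 \<le> p ^ l" using l1 pr by (intro power_increasing) (use p2 in auto)
    then show ?thesis using p2 qd by simp
  qed
  have inj: "inj f" using sd unfolding inj_def by blast
  obtain c :: 'a where c0: "c \<noteq> 0" and c1: "c \<noteq> 1"
  proof -
    have "card ({0, 1} :: 'a set) \<le> 2" by (rule order.trans[OF card_insert_le_m1]) auto
    then have "(UNIV :: 'a set) \<noteq> {0, 1}" using q3 cU by (metis Suc_n_not_le_n eval_nat_numeral(3) le_trans)
    then show ?thesis using that by blast
  qed
  have key0: "f 1 * (f x - f 0) = f x + f 0" if "x \<noteq> 0" for x
  proof -
    have "f ((x + 0) / (x - 0)) = (f x + f 0) / (f x - f 0)" using sd[OF that] by blast
    moreover have "(x + 0) / (x - 0) = 1" using that by simp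
    moreover have "f x - f 0 \<noteq> 0" using sd[OF that] by simp
    ultimately show ?thesis by (simp add: field_simps)
  qed
  have f1: "f 1 = 1"
  proof -
    have a: "f 1 * (f 1 - f 0) = f 1 + f 0" using key0[of 1] by simp
    have b: "f 1 * (f c - f 0) = f c + f 0" using key0[OF c0] .
    have "f 1 * (f 1 - f c) = f 1 - f c" using a b by (simp add: algebra_simps)
    moreover have "f 1 - f c \<noteq> 0" using sd[of 1 c] c1 by auto
    ultimately show ?thesis by simp
  qed
  have f0: "f 0 = 0"
  proof -
    have "1 * (1 - f 0) = 1 + f 0" using key0[of 1] f1 by simp
    then have "2 * f 0 = 0" by (simp add: algebra_simps)
    then show ?thesis using two by simp
  qed
  have fnz: "f x \<noteq> 0" if "x \<noteq> 0" for x using sd[OF that] f0 by simp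
  have fdiv: "f (x / y) = f x / f y" for x y
  proof (cases "y = 0")
    case True then show ?thesis using f0 by simp
  next
    case y0: False
    show ?thesis
    proof (cases "x = y")
      case True then show ?thesis using y0 f1 fnz by simp
    next
      case xy: False
      define t where "t = x / y"
      have t1: "t \<noteq> 1" using xy y0 by (simp add: t_def)
      have e1: "(x + y) / (x - y) = (t + 1) / (t - 1)" using y0 xy
        by (simp add: t_def field_simps)
      have "f ((t + 1) / (t - 1)) = (f t + f 1) / (f t - f 1)" using sd[OF t1] by simp
      then have A: "f ((x + y) / (x - y)) = (f t + 1) / (f t - 1)" using e1 f1 by simp
      define u where "u = f x / f y"
      have fy: "f y \<noteq> 0" using fnz y0 by simp
      have fxy: "f x \<noteq> f y" using sd[OF xy] by simp
      have u1: "u \<noteq> 1" using fxy fy by (simp add: u_def)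
      have "(f x + f y) / (f x - f y) = (u + 1) / (u - 1)" using fy fxy
        by (simp add: u_def field_simps)
      then have B: "(f t + 1) / (f t - 1) = (u + 1) / (u - 1)" using A sd[OF xy] by simp
      have ft1: "f t \<noteq> 1" using sd[OF t1] f1 by simp
      have "f t = u" using mob_inj[OF ft1 u1 two B] .
      then show ?thesis by (simp add: t_def u_def)
    qed
  qed
  have fmul: "f (x * y) = f x * f y" for x y
  proof -
    have "f (1 / y) = 1 / f y" using fdiv[of 1 y] f1 by simp
    then have "f (x / (1 / y)) = f x / (1 / f y)" using fdiv[of x "1 / y"] by simp
    then show ?thesis by simp
  qed
  have cr: "card (range f) = q" using card_image[OF inj] cU by simp
  define R where "R = {x::'b. x ^ q = x}"
  have Rb: "finite R \<and> card R \<le> q" unfolding R_def using roots_bound[of q] q3 by simp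
  have fR: "range f \<subseteq> R"
  proof
    fix z assume z: "z \<in> range f"
    have "z ^ q = z"
    proof (rule grp_pow[of "range f"])
      show "finite (range f)" by simp
      show "0 \<in> range f" using f0 by (metis rangeI)
      show "\<forall>x\<in>range f. \<forall>y\<in>range f. x * y \<in> range f"
      proof (intro ballI)
        fix x y assume "x \<in> range f" "y \<in> range f"
        then obtain a b where "x = f a" "y = f b" by blast
        then have "x * y = f (a * b)" using fmul by simp
        then show "x * y \<in> range f" by simp
      qed
      show "card (range f) = q" by (rule cr)
    qed (use z in auto)
    then show "z \<in> R" by (simp add: R_def)
  qed
  have rR: "range f = R" using card_subset_eq[OF _ fR] Rb cr by (metis antisym card_mono fR)
  have prb: "prime CHAR('b)" using ch pr by simp
  have oq: "odd q" using qd pr p2 by (metis even_power prime_odd_nat)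
  have subR: "is_subfield R"
    unfolding is_subfield_def R_def
  proof (intro conjI ballI)
    show "0 \<in> {x::'b. x ^ q = x}" using q3 by (simp add: power_0_left)
    show "1 \<in> {x::'b. x ^ q = x}" by simp
    fix x assume x: "x \<in> {x::'b. x ^ q = x}"
    show "- x \<in> {x::'b. x ^ q = x}" using x oq by (simp add: power_minus_odd)
    show "x \<noteq> 0 \<longrightarrow> inverse x \<in> {x::'b. x ^ q = x}" using x by (simp add: power_inverse)
    fix y assume y: "y \<in> {x::'b. x ^ q = x}"
    show "x * y \<in> {x::'b. x ^ q = x}" using x y by (simp add: power_mult_distrib)
    have "(x + y) ^ q = x ^ q + y ^ q"
      by (rule freshmans_dream'[OF prb, of q l]) (simp add: ch qd)
    then show "x + y \<in> {x::'b. x ^ q = x}" using x y by simp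
  qed
  have uniq: "S = range f" if S: "is_subfield S" "finite S" "card S = q" for S
  proof -
    have "S \<subseteq> R"
    proof
      fix z assume z: "z \<in> S"
      have "z ^ q = z"
        by (rule grp_pow[of S]) (use S z in \<open>auto simp: is_subfield_def\<close>)
      then show "z \<in> R" by (simp add: R_def)
    qed
    then have "S = R" using Rb S by (metis antisym card_mono card_subset_eq)
    then show ?thesis using rR by simp
  qed
  show ?thesis using subR rR cr uniq by simp
qed

end
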